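(* Let $\Gamma$ be a $\mathbb Z^d$-periodic graph and $H=\Delta+Q$ with real $\mathbb Z^d$-periodic $Q$ (notation as in the context). Let $\psi\in\ell^2(V_* )$ be an eigenvector with positive components of $H(0)$ corresponding to its smallest eigenvalue $\lambda_1(0)$. Then: (i) for every $f\in\ell^2(V_* )$ and every $\vartheta\in\mathbb T^d$, $$\big\langle (H(\vartheta)-\lambda_1(0)\mathbb 1)\Psi f,\Psi f\big\rangle_{V_*}=\frac12\sum_{\mathbf e=(v,u)\in\mathcal A_*}c_{uv}\,\big|f(v)-e^{i\langle\tau(\mathbf e),\vartheta\rangle}f(u)\big|^2,\qquad c_{uv}=\frac{\psi(u)\psi(v)}{\sqrt{\varkappa_u\varkappa_v}},$$ where $\mathbb 1$ is the identity and $\Psi$ is the operator of multiplication by $\psi$; (ii) for all $\vartheta\in\mathbb T^d$, $$c_0^{-2}\lambda^{(0)}_1(\vartheta)\le\lambda_1(\vartheta)-\lambda_1(0)\le c_0^2\lambda^{(0)}_1(\vartheta),\qquad c_0=\frac{\psi_+}{\psi_-},\ \ \psi_-=\min_{v\in V_*}\frac{\psi(v)}{\sqrt{\varkappa_v}},\ \ \psi_+=\max_{v\in V_*}\frac{\psi(v)}{\sqrt{\varkappa_v}},$$ where $\lambda_1(\vartheta)$ and $\lambda^{(0)}_1(\vartheta)$ are the smallest eigenvalues of $H(\vartheta)$ and $\Delta(\vartheta)$ respectively.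
   Context: A $\mathbb Z^d$-periodic graph is a connected infinite graph $\Gamma=(V,\mathcal E)$, possibly with loops and multiple edges, on which $\mathbb Z^d$ acts freely by graph automorphisms ($v\mapsto v+m$), with finite vertex degrees and finite quotient graph $\Gamma_*=\Gamma/\mathbb Z^d=(V_*,\mathcal E_* )$. Each undirected edge is regarded as two oppositely oriented edges; $\mathcal A$ is the set of oriented edges, $\mathcal A_*=\mathcal A/\mathbb Z^d$. The degree $\varkappa_v$ is the number of oriented edges starting at $v$. $Q:V\to\mathbb R$ with $Q(v+m)=Q(v)$, viewed also as a function on $V_*$. Fix a subtree of $\Gamma$ whose vertex set $V_0$ consists of $\#V_*$ pairwise non-equivalent vertices; each $v\in V$ is uniquely $v=v_0+[v]$ with $v_0\in V_0$, $[v]\in\mathbb Z^d$; the index of $\mathbf e=(u,v)$ is $\tau(\mathbf e)=[v]-[u]$, defined on $\mathcal A_*$ by shift invariance. For $\vartheta\in\mathbb T^d=\mathbb R^d/(2\pi\mathbb Z)^d$: $(\Delta(\vartheta)f)(v)=f(v)-\sum_{\mathbf e=(v,u)\in\mathcal A_*}\frac{e^{i\langle\tau(\mathbf e),\vartheta\rangle}}{\sqrt{\varkappa_v\varkappa_u}}f(u)$ and $H(\vartheta)=\Delta(\vartheta)+Q$ on $\ell^2(V_* )$, inner product $\langle f_1,f_2\rangle_{V_*}=\sum_{v}f_1(v)\overline{f_2(v)}$. *)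

theory Defs
  imports "HOL-Analysis.Analysis"
begin

text \<open>The quotient graph \<Gamma>_* of a Z^d-periodic graph: vertices of the finite type 'v,
  oriented edges of the finite type 'e (each undirected edge = two oriented edges
  exchanged by the fixed-point-free involution rv), source/target maps src/tgt,
  and the edge index tau :: 'e => int^'d (tau of the reversed edge is minus tau).
  Every vertex has positive degree (the periodic graph is connected and infinite).\<close>

definition periodic_quotient_graph ::
  "('e::finite \<Rightarrow> 'v::finite) \<Rightarrow> ('e \<Rightarrow> 'v) \<Rightarrow> ('e \<Rightarrow> 'e) \<Rightarrow> ('e \<Rightarrow> int^'d) \<Rightarrow> bool" where
  "periodic_quotient_graph src tgt rv tau \<longleftrightarrow>
     (\<forall>e. rv (rv e) = e \<and> rv e \<noteq> e \<and> src (rv e) = tgt e \<and> tgt (rv e) = src e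
          \<and> tau (rv e) = - tau e)
     \<and> (\<forall>v. \<exists>e. src e = v)"

definition deg :: "('e::finite \<Rightarrow> 'v) \<Rightarrow> 'v \<Rightarrow> nat" where
  "deg src v = card {e. src e = v}"

definition ipair :: "int^'d \<Rightarrow> real^'d \<Rightarrow> real" where
  "ipair m \<theta> = (\<Sum>i\<in>UNIV. real_of_int (m $ i) * \<theta> $ i)"

definition fiber_lap ::
  "('e::finite \<Rightarrow> 'v) \<Rightarrow> ('e \<Rightarrow> 'v) \<Rightarrow> ('e \<Rightarrow> int^'d) \<Rightarrow> real^'d \<Rightarrow> ('v \<Rightarrow> complex) \<Rightarrow> ('v \<Rightarrow> complex)" where
  "fiber_lap src tgt tau \<theta> f = (\<lambda>v. f v -
     (\<Sum>e\<in>{e. src e = v}. exp (\<i> * complex_of_real (ipair (tau e) \<theta>))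
        / complex_of_real (sqrt (real (deg src v) * real (deg src (tgt e)))) * f (tgt e)))"

definition fiber_H ::
  "('e::finite \<Rightarrow> 'v) \<Rightarrow> ('e \<Rightarrow> 'v) \<Rightarrow> ('e \<Rightarrow> int^'d) \<Rightarrow> ('v \<Rightarrow> real) \<Rightarrow> real^'d
    \<Rightarrow> ('v \<Rightarrow> complex) \<Rightarrow> ('v \<Rightarrow> complex)" where
  "fiber_H src tgt tau Q \<theta> f = (\<lambda>v. fiber_lap src tgt tau \<theta> f v + complex_of_real (Q v) * f v)"

definition inner_V :: "('v::finite \<Rightarrow> complex) \<Rightarrow> ('v \<Rightarrow> complex) \<Rightarrow> complex" where
  "inner_V f g = (\<Sum>v\<in>UNIV. f v * cnj (g v))"

text \<open>Real eigenvalues of an operator on l^2(V_*) and the smallest one (the operators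
  considered are self-adjoint on a finite-dimensional space, so all eigenvalues are real).\<close>
definition is_eigenvalue :: "(('v \<Rightarrow> complex) \<Rightarrow> ('v \<Rightarrow> complex)) \<Rightarrow> real \<Rightarrow> bool" where
  "is_eigenvalue A mu \<longleftrightarrow> (\<exists>f. f \<noteq> (\<lambda>_. 0) \<and> A f = (\<lambda>v. complex_of_real mu * f v))"

definition smallest_eigenvalue :: "(('v \<Rightarrow> complex) \<Rightarrow> ('v \<Rightarrow> complex)) \<Rightarrow> real" where
  "smallest_eigenvalue A = Min {mu. is_eigenvalue A mu}"

end

theory Submission
  imports Defs
begin


definition mop :: "('v::finite \<Rightarrow> 'v \<Rightarrow> complex) \<Rightarrow> ('v \<Rightarrow> complex) \<Rightarrow> ('v \<Rightarrow> complex)" where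
  "mop M f = (\<lambda>v. \<Sum>w\<in>UNIV. M v w * f w)"

definition nrm2 :: "('v::finite \<Rightarrow> complex) \<Rightarrow> real" where
  "nrm2 f = (\<Sum>v\<in>UNIV. (cmod (f v))\<^sup>2)"

lemma inner_V_add1: "inner_V (\<lambda>v. f v + g v) h = inner_V f h + inner_V g h"
  by (simp add: inner_V_def sum.distrib ring_distribs)
lemma inner_V_diff1: "inner_V (\<lambda>v. f v - g v) h = inner_V f h - inner_V g h"
  by (simp add: inner_V_def sum_subtractf ring_distribs)
lemma inner_V_diff2: "inner_V h (\<lambda>v. f v - g v) = inner_V h f - inner_V h g"
  by (simp add: inner_V_def sum_subtractf ring_distribs)
lemma inner_V_scale1: "inner_V (\<lambda>v. c * f v) h = c * inner_V f h"
  by (simp add: inner_V_def sum_distrib_left mult.assoc)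
lemma inner_V_add2: "inner_V h (\<lambda>v. f v + g v) = inner_V h f + inner_V h g"
  by (simp add: inner_V_def sum.distrib ring_distribs)
lemma inner_V_scale2: "inner_V h (\<lambda>v. c * f v) = cnj c * inner_V h f"
  by (simp add: inner_V_def sum_distrib_left algebra_simps)
lemma inner_V_cnj: "inner_V g f = cnj (inner_V f g)"
  by (simp add: inner_V_def mult.commute)
lemma inner_V_self: "inner_V f f = complex_of_real (nrm2 f)"
proof -
  have "\<And>v. f v * cnj (f v) = complex_of_real ((cmod (f v))\<^sup>2)"
    by (metis complex_norm_square of_real_power)
  then show ?thesis by (simp add: inner_V_def nrm2_def)
qed
lemma nrm2_nonneg: "nrm2 f \<ge> 0"
  by (simp add: nrm2_def sum_nonneg)
lemma nrm2_zero: "nrm2 f = 0 \<longleftrightarrow> f = (\<lambda>_. 0)"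
  by (auto simp: nrm2_def sum_nonneg_eq_0_iff)
lemma nrm2_scale: "nrm2 (\<lambda>v. c * f v) = (cmod c)\<^sup>2 * nrm2 f"
  by (simp add: nrm2_def sum_distrib_left norm_mult power_mult_distrib)

lemma mop_add: "mop M (\<lambda>v. f v + g v) = (\<lambda>v. mop M f v + mop M g v)"
  by (simp add: mop_def sum.distrib ring_distribs)
lemma mop_diff: "mop M (\<lambda>v. f v - g v) = (\<lambda>v. mop M f v - mop M g v)"
  by (simp add: mop_def sum_subtractf ring_distribs)
lemma mop_scale: "mop M (\<lambda>v. c * f v) = (\<lambda>v. c * mop M f v)"
  by (simp add: mop_def sum_distrib_left algebra_simps)

locale herm =
  fixes M :: "'v::finite \<Rightarrow> 'v \<Rightarrow> complex"
  assumes herm: "\<And>v w. cnj (M v w) = M w v"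
begin

lemma mop_sym: "inner_V (mop M f) g = inner_V f (mop M g)"
proof -
  have "inner_V (mop M f) g = (\<Sum>v\<in>UNIV. \<Sum>w\<in>UNIV. M v w * f w * cnj (g v))"
    by (simp add: inner_V_def mop_def sum_distrib_right)
  also have "\<dots> = (\<Sum>w\<in>UNIV. \<Sum>v\<in>UNIV. M v w * f w * cnj (g v))"
    by (rule sum.swap)
  also have "\<dots> = inner_V f (mop M g)"
    unfolding inner_V_def mop_def
  proof (rule sum.cong[OF refl])
    fix w
    have "cnj (\<Sum>v\<in>UNIV. M w v * g v) = (\<Sum>v\<in>UNIV. M v w * cnj (g v))"
      by (simp add: herm)
    then show "(\<Sum>v\<in>UNIV. M v w * f w * cnj (g v)) = f w * cnj (\<Sum>v\<in>UNIV. M w v * g v)"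
      by (simp add: sum_distrib_left mult_ac)
  qed
  finally show ?thesis .
qed

lemma quad_real: "inner_V (mop M f) f = complex_of_real (Re (inner_V (mop M f) f))"
proof -
  have h: "inner_V (mop M f) f = cnj (inner_V (mop M f) f)"
    using inner_V_cnj[of "mop M f" f] mop_sym[of f f] by simp
  have "Im (inner_V (mop M f) f) = - Im (inner_V (mop M f) f)"
    using arg_cong[OF h, of Im] by simp
  then show ?thesis by (simp add: complex_eq_iff)
qed

definition q where "q f = Re (inner_V (mop M f) f)"

lemma q_scale: "q (\<lambda>v. c * f v) = (cmod c)\<^sup>2 * q f"
proof -
  have "inner_V (mop M (\<lambda>v. c * f v)) (\<lambda>v. c * f v) = (c * cnj c) * inner_V (mop M f) f"
    by (simp add: mop_scale inner_V_scale1 inner_V_scale2)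
  also have "c * cnj c = complex_of_real ((cmod c)\<^sup>2)" by (simp add: complex_norm_square[symmetric])
  finally show ?thesis unfolding q_def by simp
qed

lemma q_zero: "q (\<lambda>_. 0) = 0"
  by (simp add: q_def inner_V_def)

lemma q_min_exists: "\<exists>m. (\<forall>f. m * nrm2 f \<le> q f) \<and> (\<exists>g. nrm2 g = 1 \<and> q g = m)"
proof -
  define F where "F = (\<lambda>x::complex^'v. q (\<lambda>v. x $ v))"
  have nv: "\<And>x::complex^'v. (norm x)\<^sup>2 = nrm2 (\<lambda>v. x $ v)"
    by (simp add: norm_vec_def L2_set_def nrm2_def sum_nonneg)
  have cont: "continuous_on (sphere 0 1) F"
    unfolding F_def q_def inner_V_def mop_def
    by (intro continuous_intros continuous_on_component continuous_on_id)
  have ne: "sphere (0::complex^'v) 1 \<noteq> {}"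
  proof -
    have "(norm (axis undefined (1::complex) :: complex^'v))\<^sup>2 = 1"
    proof -
      have "(\<lambda>v. (cmod ((axis undefined (1::complex) :: complex^'v) $ v))\<^sup>2) = (\<lambda>v. if v = undefined then 1 else 0)"
        by (auto simp: axis_def)
      then show ?thesis unfolding nv nrm2_def by (simp only:) simp
    qed
    then have "axis undefined (1::complex) \<in> sphere (0::complex^'v) 1"
      using norm_ge_zero[of "axis undefined (1::complex) :: complex^'v"] by (auto simp: power2_eq_1_iff)
    then show ?thesis by blast
  qed
  obtain x0 where x0: "x0 \<in> sphere 0 1" and mn: "\<And>y. y \<in> sphere 0 1 \<Longrightarrow> F x0 \<le> F y"
    using continuous_attains_inf[OF compact_sphere ne cont] by blast
  define m where "m = F x0"
  have "\<forall>f. m * nrm2 f \<le> q f"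
  proof
    fix f :: "'v \<Rightarrow> complex"
    show "m * nrm2 f \<le> q f"
    proof (cases "f = (\<lambda>_. 0)")
      case True then show ?thesis by (simp add: q_zero nrm2_def)
    next
      case False
      then have "nrm2 f \<noteq> 0" using nrm2_zero by blast
      then have np: "nrm2 f > 0" using nrm2_nonneg[of f] by linarith
      define c where "c = complex_of_real (1 / sqrt (nrm2 f))"
      define y where "y = (\<chi> v. c * f v)"
      have yv: "(\<lambda>v. y $ v) = (\<lambda>v. c * f v)" by (rule ext) (simp add: y_def)
      have cc: "(cmod c)\<^sup>2 = 1 / nrm2 f"
      proof -
        have "cmod c = 1 / sqrt (nrm2 f)" unfolding c_def norm_of_real using np by simp
        then show ?thesis using np by (simp add: power_divide)
      qed
      have "(norm y)\<^sup>2 = 1" unfolding nv yv nrm2_scale cc using np by simp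
      then have "y \<in> sphere 0 1" using norm_ge_zero[of y] by (auto simp: power2_eq_1_iff)
      then have "m \<le> F y" unfolding m_def by (rule mn)
      also have "F y = (cmod c)\<^sup>2 * q f" by (simp add: F_def yv q_scale)
      also note cc
      finally have "m \<le> q f / nrm2 f" by simp
      then show ?thesis using np by (simp add: pos_le_divide_eq)
    qed
  qed
  moreover have "nrm2 (\<lambda>v. x0 $ v) = 1 \<and> q (\<lambda>v. x0 $ v) = m"
    using x0 nv[of x0] by (simp add: m_def F_def)
  ultimately show ?thesis by blast
qed

lemma min_eig:
  assumes lb: "\<forall>f. m * nrm2 f \<le> q f" and g1: "nrm2 g = 1" and qg: "q g = m"
  shows "mop M g = (\<lambda>v. complex_of_real m * g v)"
proof -
  define r where "r = (\<lambda>v. mop M g v - complex_of_real m * g v)"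
  define s where "s = (\<lambda>v. mop M r v - complex_of_real m * r v)"
  have rg: "Re (inner_V r g) = 0"
    using qg g1 by (simp add: r_def inner_V_diff1 inner_V_scale1 inner_V_self q_def)
  have sg: "inner_V s g = inner_V r r"
  proof -
    have "inner_V s g = inner_V r (mop M g) - complex_of_real m * inner_V r g"
      by (simp add: s_def inner_V_diff1 inner_V_scale1 mop_sym)
    also have "\<dots> = inner_V r r"
      using inner_V_diff2[of r "mop M g" "\<lambda>v. complex_of_real m * g v"] inner_V_scale2[of r "complex_of_real m" g]
      by (simp add: r_def[symmetric])
    finally show ?thesis .
  qed
  have key: "0 \<le> 2 * t * nrm2 r + t\<^sup>2 * Re (inner_V s r)" for t :: real
  proof -
    define h where "h = (\<lambda>v. g v + complex_of_real t * r v)"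
    have "m * nrm2 h \<le> q h" using lb by blast
    then have 1: "0 \<le> Re (inner_V (\<lambda>v. mop M h v - complex_of_real m * h v) h)"
      by (simp add: inner_V_diff1 inner_V_scale1 inner_V_self q_def)
    have mh: "mop M h = (\<lambda>v. mop M g v + complex_of_real t * mop M r v)"
      by (simp add: h_def mop_add mop_scale)
    have rv: "\<And>v. r v = mop M g v - complex_of_real m * g v" by (simp add: r_def)
    have 2: "(\<lambda>v. mop M h v - complex_of_real m * h v) = (\<lambda>v. r v + complex_of_real t * s v)"
      unfolding mh by (simp add: h_def s_def rv algebra_simps)
    have 3: "inner_V (\<lambda>v. r v + complex_of_real t * s v) h = inner_V r g + complex_of_real t * inner_V r r
       + complex_of_real t * inner_V s g + complex_of_real t * complex_of_real t * inner_V s r"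
      by (simp add: h_def inner_V_add1 inner_V_add2 inner_V_scale1 inner_V_scale2 algebra_simps)
    show ?thesis using 1 unfolding 2 3 sg using rg
      by (simp add: inner_V_self power2_eq_square)
  qed
  have "nrm2 r = 0"
  proof (rule ccontr)
    assume "nrm2 r \<noteq> 0"
    then have a: "nrm2 r > 0" using nrm2_nonneg[of r] by linarith
    define b where "b = Re (inner_V s r)"
    define t where "t = - nrm2 r / (\<bar>b\<bar> + 1)"
    have k: "0 \<le> 2 * t * nrm2 r + t\<^sup>2 * b" using key b_def by blast
    have "t\<^sup>2 * b \<le> t\<^sup>2 * \<bar>b\<bar>" by (simp add: mult_left_mono)
    also have "t\<^sup>2 * \<bar>b\<bar> = (nrm2 r)\<^sup>2 * \<bar>b\<bar> / (\<bar>b\<bar> + 1)\<^sup>2"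
      by (simp add: t_def power_divide)
    also have "\<dots> \<le> (nrm2 r)\<^sup>2 / (\<bar>b\<bar> + 1)"
    proof -
      have "(nrm2 r)\<^sup>2 * \<bar>b\<bar> / (\<bar>b\<bar> + 1)\<^sup>2 = ((nrm2 r)\<^sup>2 / (\<bar>b\<bar> + 1)) * (\<bar>b\<bar> / (\<bar>b\<bar> + 1))"
        by (simp add: power2_eq_square)
      also have "\<dots> \<le> ((nrm2 r)\<^sup>2 / (\<bar>b\<bar> + 1)) * 1"
        by (rule mult_left_mono) auto
      finally show ?thesis by simp
    qed
    finally have tb: "t\<^sup>2 * b \<le> (nrm2 r)\<^sup>2 / (\<bar>b\<bar> + 1)" .
    have tt: "2 * t * nrm2 r = - 2 * ((nrm2 r)\<^sup>2 / (\<bar>b\<bar> + 1))"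
      by (simp add: t_def power2_eq_square)
    have "(nrm2 r)\<^sup>2 / (\<bar>b\<bar> + 1) > 0" using a by (simp add: add_pos_nonneg)
    then show False using k tb tt by linarith
  qed
  then have "r = (\<lambda>_. 0)" by (simp add: nrm2_zero)
  then have "\<forall>v. mop M g v - complex_of_real m * g v = 0" by (simp add: r_def fun_eq_iff)
  then show ?thesis by (simp add: fun_eq_iff)
qed

lemma eig_facts:
  "(\<forall>g. smallest_eigenvalue (mop M) * nrm2 g \<le> Re (inner_V (mop M g) g))
   \<and> is_eigenvalue (mop M) (smallest_eigenvalue (mop M))"
proof -
  obtain m g where lb: "\<forall>f. m * nrm2 f \<le> q f" and g1: "nrm2 g = 1" and qg: "q g = m"
    using q_min_exists by blast
  have gnz: "g \<noteq> (\<lambda>_. 0)" using g1 nrm2_zero by force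
  have evm: "is_eigenvalue (mop M) m"
    unfolding is_eigenvalue_def using gnz min_eig[OF lb g1 qg] by blast
  define E where "E = {mu. is_eigenvalue (mop M) mu}"
  have low: "m \<le> mu" if muE: "mu \<in> E" for mu
  proof -
    obtain f where fnz: "f \<noteq> (\<lambda>_. 0)" and fe: "mop M f = (\<lambda>v. complex_of_real mu * f v)"
      using muE unfolding E_def is_eigenvalue_def by blast
    have "q f = mu * nrm2 f" unfolding q_def fe inner_V_scale1 inner_V_self by simp
    moreover have "nrm2 f > 0" using fnz nrm2_zero nrm2_nonneg[of f] by (metis less_eq_real_def)
    ultimately show ?thesis using lb by (metis mult_le_cancel_right_pos)
  qed
  define ev where "ev mu = (SOME f. f \<noteq> (\<lambda>_. 0) \<and> mop M f = (\<lambda>v. complex_of_real mu * f v))" for mu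
  have evp: "ev mu \<noteq> (\<lambda>_. 0) \<and> mop M (ev mu) = (\<lambda>v. complex_of_real mu * ev mu v)" if "mu \<in> E" for mu
    unfolding ev_def using that unfolding E_def is_eigenvalue_def mem_Collect_eq by (rule someI_ex)
  define tv :: "('v \<Rightarrow> complex) \<Rightarrow> complex^'v" where "tv f = (\<chi> v. f v)" for f
  have tvi: "inner (tv f) (tv h) = Re (inner_V f h)" for f h
    by (simp add: tv_def inner_vec_def inner_V_def inner_complex_def)
  have tv0: "tv f = 0 \<longleftrightarrow> f = (\<lambda>_. 0)" for f
    by (simp add: tv_def vec_eq_iff fun_eq_iff)
  have tvinj: "tv f = tv h \<Longrightarrow> f = h" for f h
    by (simp add: tv_def vec_eq_iff fun_eq_iff)
  have orth: "inner_V (ev mu) (ev nu) = 0" if "mu \<in> E" "nu \<in> E" "mu \<noteq> nu" for mu nu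
  proof -
    have "complex_of_real mu * inner_V (ev mu) (ev nu) = inner_V (mop M (ev mu)) (ev nu)"
      using evp[OF that(1)] by (simp add: inner_V_scale1)
    also have "\<dots> = inner_V (ev mu) (mop M (ev nu))" by (rule mop_sym)
    also have "\<dots> = complex_of_real nu * inner_V (ev mu) (ev nu)"
      using evp[OF that(2)] by (simp add: inner_V_scale2)
    finally have "(complex_of_real mu - complex_of_real nu) * inner_V (ev mu) (ev nu) = 0"
      by (simp add: algebra_simps)
    then show ?thesis using that(3) by simp
  qed
  define S where "S = (tv \<circ> ev) ` E"
  have "pairwise orthogonal S"
    unfolding pairwise_def S_def orthogonal_def
  proof (clarsimp)
    fix mu nu assume a: "mu \<in> E" "nu \<in> E" "tv (ev mu) \<noteq> tv (ev nu)"
    then have "mu \<noteq> nu" by auto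
    then show "inner (tv (ev mu)) (tv (ev nu)) = 0" using orth a by (simp add: tvi)
  qed
  moreover have "0 \<notin> S" unfolding S_def using evp tv0 by auto
  ultimately have "independent S" by (rule pairwise_orthogonal_independent)
  then have finS: "finite S" using independent_bound by blast
  have "inj_on (tv \<circ> ev) E"
  proof (rule inj_onI)
    fix mu nu assume a: "mu \<in> E" "nu \<in> E" "(tv \<circ> ev) mu = (tv \<circ> ev) nu"
    then have eq: "ev mu = ev nu" using tvinj by auto
    obtain v where v: "ev mu v \<noteq> 0" using evp[OF a(1)] by auto
    have "complex_of_real mu * ev mu v = complex_of_real nu * ev mu v"
      using evp[OF a(1)] evp[OF a(2)] eq by (metis (no_types, lifting))
    then show "mu = nu" using v by simp
  qed
  then have finE: "finite E" using finS finite_imageD unfolding S_def by blast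
  have "Min E = m" using finE low evm unfolding E_def by (intro Min_eqI) auto
  then have sm: "smallest_eigenvalue (mop M) = m" unfolding smallest_eigenvalue_def E_def by simp
  show ?thesis using lb evm unfolding sm q_def by simp
qed

end


lemma ipair_neg: "ipair (- m) \<theta> = - ipair m \<theta>"
  by (simp add: ipair_def sum_negf)

lemma ipair_zero: "ipair m 0 = 0"
  by (simp add: ipair_def)

lemma cnj_expi: "cnj (exp (\<i> * complex_of_real x)) = exp (\<i> * complex_of_real (- x))"
  by (simp add: exp_cnj)

lemma cmod_expi: "cmod (exp (\<i> * complex_of_real x)) = 1"
  by (simp add: norm_exp_eq_Re)

lemma norm_sq_diff:
  assumes "cmod E = 1"
  shows "(cmod (a - E * b))\<^sup>2 = (cmod a)\<^sup>2 + (cmod b)\<^sup>2 - 2 * Re (E * b * cnj a)"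
proof -
  have EE: "E * cnj E = 1" using assms complex_norm_square[of E] by simp
  have "complex_of_real ((cmod (a - E * b))\<^sup>2) = (a - E * b) * cnj (a - E * b)"
    by (rule complex_norm_square)
  also have "\<dots> = a * cnj a + (E * cnj E) * (b * cnj b) - (E * b * cnj a + cnj (E * b * cnj a))"
    by (simp add: algebra_simps)
  also have "\<dots> = complex_of_real ((cmod a)\<^sup>2 + (cmod b)\<^sup>2 - 2 * Re (E * b * cnj a))"
    unfolding EE complex_add_cnj by (simp add: complex_norm_square[symmetric])
  finally show ?thesis by (simp only: of_real_eq_iff)
qed

locale pqg =
  fixes src tgt :: "'e::finite \<Rightarrow> 'v::finite" and rv :: "'e \<Rightarrow> 'e" and tau :: "'e \<Rightarrow> int^'d"
  assumes G: "periodic_quotient_graph src tgt rv tau"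
begin

lemma rv_rv[simp]: "rv (rv e) = e" and src_rv[simp]: "src (rv e) = tgt e"
  and tgt_rv[simp]: "tgt (rv e) = src e" and tau_rv[simp]: "tau (rv e) = - tau e"
  using G unfolding periodic_quotient_graph_def by auto

lemma deg_pos: "real (deg src v) > 0"
proof -
  obtain e where "src e = v" using G unfolding periodic_quotient_graph_def by blast
  then have "{e. src e = v} \<noteq> {}" by blast
  then show ?thesis unfolding deg_def by (simp add: card_gt_0_iff)
qed

lemma sum_rv: "(\<Sum>e\<in>A. g e) = (\<Sum>e\<in>rv ` A. g (rv e))"
proof -
  have "inj_on rv (rv ` A)" by (metis inj_on_inverseI rv_rv)
  then have "(\<Sum>e\<in>rv ` A. g (rv e)) = (\<Sum>e\<in>rv ` (rv ` A). g e)"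
    by (simp add: sum.reindex)
  also have "rv ` (rv ` A) = A" by (force simp: image_iff)
  finally show ?thesis by simp
qed

lemma sum_rv_UNIV: "(\<Sum>e\<in>UNIV. g e) = (\<Sum>e\<in>UNIV. g (rv e))"
proof -
  have "rv ` UNIV = UNIV" by (metis rv_rv surj_def)
  then show ?thesis using sum_rv[of g UNIV] by simp
qed

definition cf :: "real^'d \<Rightarrow> 'e \<Rightarrow> complex" where
  "cf \<theta> e = exp (\<i> * complex_of_real (ipair (tau e) \<theta>))
     / complex_of_real (sqrt (real (deg src (src e)) * real (deg src (tgt e))))"

lemma cf_rv: "cnj (cf \<theta> e) = cf \<theta> (rv e)"
  by (simp add: cf_def cnj_expi ipair_neg mult.commute)

definition Mat :: "('v \<Rightarrow> real) \<Rightarrow> real^'d \<Rightarrow> 'v \<Rightarrow> 'v \<Rightarrow> complex" where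
  "Mat Q \<theta> v w = (if v = w then complex_of_real (1 + Q v) else 0)
     - (\<Sum>e\<in>{e. src e = v \<and> tgt e = w}. cf \<theta> e)"

lemma Mat_herm: "herm (Mat Q \<theta>)"
proof
  fix v w
  have "cnj (\<Sum>e\<in>{e. src e = v \<and> tgt e = w}. cf \<theta> e) = (\<Sum>e\<in>{e. src e = v \<and> tgt e = w}. cf \<theta> (rv e))"
    by (simp add: cf_rv)
  also have "\<dots> = (\<Sum>e\<in>rv ` {e. src e = v \<and> tgt e = w}. cf \<theta> e)"
    using sum_rv[of "\<lambda>e. cf \<theta> (rv e)" "{e. src e = v \<and> tgt e = w}"] by simp
  also have "rv ` {e. src e = v \<and> tgt e = w} = {e. src e = w \<and> tgt e = v}"
    by (auto simp: image_iff) (metis rv_rv src_rv tgt_rv)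
  finally show "cnj (Mat Q \<theta> v w) = Mat Q \<theta> w v"
    by (simp add: Mat_def)
qed

lemma H_mop: "fiber_H src tgt tau Q \<theta> = mop (Mat Q \<theta>)"
proof (intro ext)
  fix f v
  have 1: "(\<Sum>w\<in>UNIV. (if v = w then complex_of_real (1 + Q v) else 0) * f w) = complex_of_real (1 + Q v) * f v"
  proof -
    have "(\<Sum>w\<in>UNIV. (if v = w then complex_of_real (1 + Q v) else 0) * f w)
        = (\<Sum>w\<in>UNIV. if w = v then complex_of_real (1 + Q v) * f w else 0)"
      by (rule sum.cong) auto
    then show ?thesis by simp
  qed
  have 2: "(\<Sum>w\<in>UNIV. (\<Sum>e\<in>{e. src e = v \<and> tgt e = w}. cf \<theta> e) * f w)
      = (\<Sum>e\<in>{e. src e = v}. cf \<theta> e * f (tgt e))"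
  proof -
    have "(\<Sum>w\<in>UNIV. (\<Sum>e\<in>{e. src e = v \<and> tgt e = w}. cf \<theta> e) * f w)
        = (\<Sum>w\<in>UNIV. (\<Sum>e\<in>{e. e \<in> {e. src e = v} \<and> tgt e = w}. cf \<theta> e * f (tgt e)))"
      by (rule sum.cong) (auto simp: sum_distrib_right intro: sum.cong)
    also have "\<dots> = (\<Sum>e\<in>{e. src e = v}. cf \<theta> e * f (tgt e))"
      by (rule sum.group) auto
    finally show ?thesis .
  qed
  have 3: "(\<Sum>e\<in>{e. src e = v}. exp (\<i> * complex_of_real (ipair (tau e) \<theta>))
        / complex_of_real (sqrt (real (deg src v) * real (deg src (tgt e)))) * f (tgt e))
      = (\<Sum>e\<in>{e. src e = v}. cf \<theta> e * f (tgt e))"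
    by (rule sum.cong) (auto simp: cf_def)
  have "mop (Mat Q \<theta>) f v = (\<Sum>w\<in>UNIV. (if v = w then complex_of_real (1 + Q v) else 0) * f w)
      - (\<Sum>w\<in>UNIV. (\<Sum>e\<in>{e. src e = v \<and> tgt e = w}. cf \<theta> e) * f w)"
    by (simp add: mop_def Mat_def left_diff_distrib sum_subtractf)
  also have "\<dots> = complex_of_real (1 + Q v) * f v - (\<Sum>e\<in>{e. src e = v}. cf \<theta> e * f (tgt e))"
    by (simp only: 1 2)
  also have "\<dots> = fiber_H src tgt tau Q \<theta> f v"
    unfolding fiber_H_def fiber_lap_def 3 by (simp add: algebra_simps)
  finally show "fiber_H src tgt tau Q \<theta> f v = mop (Mat Q \<theta>) f v" by simp
qed

lemma lap_H: "fiber_lap src tgt tau \<theta> = fiber_H src tgt tau (\<lambda>_. 0) \<theta>"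
  by (intro ext) (simp add: fiber_H_def)

lemma spec_H:
  "(\<forall>g. smallest_eigenvalue (fiber_H src tgt tau Q \<theta>) * nrm2 g \<le> Re (inner_V (fiber_H src tgt tau Q \<theta> g) g))
   \<and> is_eigenvalue (fiber_H src tgt tau Q \<theta>) (smallest_eigenvalue (fiber_H src tgt tau Q \<theta>))"
  unfolding H_mop by (rule herm.eig_facts[OF Mat_herm])

lemma quad_id:
  fixes Q \<psi> :: "'v \<Rightarrow> real" and L :: real
  assumes eig: "fiber_H src tgt tau Q 0 (\<lambda>v. complex_of_real (\<psi> v)) = (\<lambda>v. complex_of_real (L * \<psi> v))"
  shows "inner_V (\<lambda>v. fiber_H src tgt tau Q \<theta> (\<lambda>w. complex_of_real (\<psi> w) * f w) v
                  - complex_of_real L * (complex_of_real (\<psi> v) * f v))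
            (\<lambda>w. complex_of_real (\<psi> w) * f w)
       = complex_of_real ((1/2) * (\<Sum>e\<in>UNIV.
              \<psi> (tgt e) * \<psi> (src e) / sqrt (real (deg src (tgt e)) * real (deg src (src e)))
              * (cmod (f (src e) - exp (\<i> * complex_of_real (ipair (tau e) \<theta>)) * f (tgt e)))\<^sup>2))"
proof -
  define k where "k v = real (deg src v)" for v
  define c where "c e = \<psi> (tgt e) * \<psi> (src e) / sqrt (k (tgt e) * k (src e))" for e
  define E where "E e = exp (\<i> * complex_of_real (ipair (tau e) \<theta>))" for e
  have c_rv: "c (rv e) = c e" for e by (simp add: c_def mult.commute)
  have E_rv: "E (rv e) = cnj (E e)" for e by (simp add: E_def cnj_expi ipair_neg)
  have Enorm: "cmod (E e) = 1" for e by (simp add: E_def cmod_expi)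
  have A: "(1 + Q v - L) * \<psi> v = (\<Sum>e\<in>{e. src e = v}. \<psi> (tgt e) / sqrt (k v * k (tgt e)))" for v
  proof -
    have e1: "fiber_H src tgt tau Q 0 (\<lambda>v. complex_of_real (\<psi> v)) v = complex_of_real (L * \<psi> v)"
      using fun_cong[OF eig, of v] by simp
    have e2: "(\<Sum>e\<in>{e. src e = v}. exp (\<i> * complex_of_real (ipair (tau e) 0))
        / complex_of_real (sqrt (real (deg src v) * real (deg src (tgt e)))) * complex_of_real (\<psi> (tgt e)))
        = complex_of_real (\<Sum>e\<in>{e. src e = v}. \<psi> (tgt e) / sqrt (k v * k (tgt e)))"
      unfolding of_real_sum by (rule sum.cong) (auto simp: ipair_zero k_def)
    have "complex_of_real (\<psi> v - (\<Sum>e\<in>{e. src e = v}. \<psi> (tgt e) / sqrt (k v * k (tgt e))) + Q v * \<psi> v)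
        = complex_of_real (L * \<psi> v)"
      using e1 unfolding fiber_H_def fiber_lap_def e2 by simp
    then have "\<psi> v - (\<Sum>e\<in>{e. src e = v}. \<psi> (tgt e) / sqrt (k v * k (tgt e))) + Q v * \<psi> v = L * \<psi> v"
      by (simp only: of_real_eq_iff)
    then show ?thesis by (simp add: algebra_simps)
  qed
  define T where "T e = complex_of_real (c e) * (complex_of_real ((cmod (f (src e)))\<^sup>2) - E e * f (tgt e) * cnj (f (src e)))" for e
  have B: "(fiber_H src tgt tau Q \<theta> (\<lambda>w. complex_of_real (\<psi> w) * f w) v
                  - complex_of_real L * (complex_of_real (\<psi> v) * f v)) * cnj (complex_of_real (\<psi> v) * f v)
         = (\<Sum>e\<in>{e. src e = v}. T e)" for v
  proof -
    have Hv: "fiber_H src tgt tau Q \<theta> (\<lambda>w. complex_of_real (\<psi> w) * f w) v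
       = complex_of_real (\<psi> v) * f v - (\<Sum>e\<in>{e. src e = v}. E e / complex_of_real (sqrt (k v * k (tgt e)))
           * (complex_of_real (\<psi> (tgt e)) * f (tgt e))) + complex_of_real (Q v) * (complex_of_real (\<psi> v) * f v)"
      by (simp add: fiber_H_def fiber_lap_def E_def k_def)
    have "fiber_H src tgt tau Q \<theta> (\<lambda>w. complex_of_real (\<psi> w) * f w) v
                  - complex_of_real L * (complex_of_real (\<psi> v) * f v)
        = complex_of_real ((1 + Q v - L) * \<psi> v) * f v - (\<Sum>e\<in>{e. src e = v}. E e / complex_of_real (sqrt (k v * k (tgt e)))
           * (complex_of_real (\<psi> (tgt e)) * f (tgt e)))"
      unfolding Hv by (simp add: algebra_simps)
    also have "\<dots> = (\<Sum>e\<in>{e. src e = v}. complex_of_real (\<psi> (tgt e) / sqrt (k v * k (tgt e))) * f v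
        - E e / complex_of_real (sqrt (k v * k (tgt e))) * (complex_of_real (\<psi> (tgt e)) * f (tgt e)))"
      unfolding A by (simp add: of_real_sum sum_distrib_right sum_subtractf)
    finally have "(fiber_H src tgt tau Q \<theta> (\<lambda>w. complex_of_real (\<psi> w) * f w) v
                  - complex_of_real L * (complex_of_real (\<psi> v) * f v)) * cnj (complex_of_real (\<psi> v) * f v)
       = (\<Sum>e\<in>{e. src e = v}. (complex_of_real (\<psi> (tgt e) / sqrt (k v * k (tgt e))) * f v
        - E e / complex_of_real (sqrt (k v * k (tgt e))) * (complex_of_real (\<psi> (tgt e)) * f (tgt e)))
         * (complex_of_real (\<psi> v) * cnj (f v)))"
      by (simp add: sum_distrib_right)
    also have "\<dots> = (\<Sum>e\<in>{e. src e = v}. T e)"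
    proof (rule sum.cong[OF refl])
      fix e assume "e \<in> {e. src e = v}"
      then have se: "src e = v" by simp
      have ss: "sqrt (k (tgt e) * k v) = sqrt (k v * k (tgt e))" by (simp add: mult.commute)
      show "(complex_of_real (\<psi> (tgt e) / sqrt (k v * k (tgt e))) * f v
        - E e / complex_of_real (sqrt (k v * k (tgt e))) * (complex_of_real (\<psi> (tgt e)) * f (tgt e)))
         * (complex_of_real (\<psi> v) * cnj (f v)) = T e"
        unfolding T_def c_def se ss complex_norm_square
        by (simp add: divide_inverse algebra_simps)
    qed
    finally show ?thesis .
  qed
  have LHS: "inner_V (\<lambda>v. fiber_H src tgt tau Q \<theta> (\<lambda>w. complex_of_real (\<psi> w) * f w) v
                  - complex_of_real L * (complex_of_real (\<psi> v) * f v))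
            (\<lambda>w. complex_of_real (\<psi> w) * f w) = (\<Sum>e\<in>UNIV. T e)"
  proof -
    have "inner_V (\<lambda>v. fiber_H src tgt tau Q \<theta> (\<lambda>w. complex_of_real (\<psi> w) * f w) v
                  - complex_of_real L * (complex_of_real (\<psi> v) * f v))
            (\<lambda>w. complex_of_real (\<psi> w) * f w) = (\<Sum>v\<in>UNIV. \<Sum>e\<in>{e. e \<in> UNIV \<and> src e = v}. T e)"
      unfolding inner_V_def using B by simp
    also have "\<dots> = (\<Sum>e\<in>UNIV. T e)" by (rule sum.group) auto
    finally show ?thesis .
  qed
  define X where "X = (\<Sum>e\<in>UNIV. complex_of_real (c e) * (E e * f (tgt e) * cnj (f (src e))))"
  have "cnj X = (\<Sum>e\<in>UNIV. complex_of_real (c e) * (cnj (E e) * cnj (f (tgt e)) * f (src e)))"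
    by (simp add: X_def)
  also have "\<dots> = (\<Sum>e\<in>UNIV. complex_of_real (c (rv e)) * (cnj (E (rv e)) * cnj (f (tgt (rv e))) * f (src (rv e))))"
    by (rule sum_rv_UNIV)
  also have "\<dots> = X" unfolding X_def c_rv E_rv by (simp add: mult_ac)
  finally have "cnj X = X" .
  then have "Im (cnj X) = Im X" by simp
  then have "Im X = 0" by simp
  then have Xr: "X = complex_of_real (Re X)" by (simp add: complex_eq_iff)
  have ReX: "Re X = (\<Sum>e\<in>UNIV. c e * Re (E e * f (tgt e) * cnj (f (src e))))"
    by (simp add: X_def)
  have sq: "(\<Sum>e\<in>UNIV. c e * (cmod (f (tgt e)))\<^sup>2) = (\<Sum>e\<in>UNIV. c e * (cmod (f (src e)))\<^sup>2)"
    by (subst sum_rv_UNIV) (simp add: c_rv)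
  have "(\<Sum>e\<in>UNIV. T e) = complex_of_real (\<Sum>e\<in>UNIV. c e * (cmod (f (src e)))\<^sup>2) - X"
    by (simp add: T_def X_def right_diff_distrib sum_subtractf of_real_sum)
  also have "\<dots> = complex_of_real ((\<Sum>e\<in>UNIV. c e * (cmod (f (src e)))\<^sup>2) - Re X)"
    by (subst Xr) simp
  also have "(\<Sum>e\<in>UNIV. c e * (cmod (f (src e)))\<^sup>2) - Re X
      = (1/2) * (\<Sum>e\<in>UNIV. c e * (cmod (f (src e) - E e * f (tgt e)))\<^sup>2)"
  proof -
    have "(\<Sum>e\<in>UNIV. c e * (cmod (f (src e) - E e * f (tgt e)))\<^sup>2)
       = (\<Sum>e\<in>UNIV. c e * (cmod (f (src e)))\<^sup>2) + (\<Sum>e\<in>UNIV. c e * (cmod (f (tgt e)))\<^sup>2)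
         - 2 * (\<Sum>e\<in>UNIV. c e * Re (E e * f (tgt e) * cnj (f (src e))))"
      by (simp add: norm_sq_diff[OF Enorm] algebra_simps sum.distrib sum_subtractf sum_distrib_left)
    then show ?thesis unfolding sq ReX by simp
  qed
  finally show ?thesis unfolding LHS c_def k_def E_def by simp
qed

lemma lap_id:
  "Re (inner_V (fiber_lap src tgt tau \<theta> (\<lambda>w. complex_of_real (sqrt (real (deg src w))) * f w))
        (\<lambda>w. complex_of_real (sqrt (real (deg src w))) * f w))
   = (1/2) * (\<Sum>e\<in>UNIV. (cmod (f (src e) - exp (\<i> * complex_of_real (ipair (tau e) \<theta>)) * f (tgt e)))\<^sup>2)"
proof -
  define k where "k v = real (deg src v)" for v
  have kp: "k v > 0" for v using deg_pos by (simp add: k_def)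
  have eig: "fiber_H src tgt tau (\<lambda>_. 0) 0 (\<lambda>v. complex_of_real (sqrt (k v)))
      = (\<lambda>v. complex_of_real (0 * sqrt (k v)))"
  proof (rule ext)
    fix v
    have "(\<Sum>e\<in>{e. src e = v}. exp (\<i> * complex_of_real (ipair (tau e) 0))
        / complex_of_real (sqrt (real (deg src v) * real (deg src (tgt e)))) * complex_of_real (sqrt (k (tgt e))))
      = (\<Sum>e\<in>{e. src e = v}. complex_of_real (1 / sqrt (k v)))"
    proof (rule sum.cong[OF refl])
      fix e
      have "sqrt (k (tgt e)) > 0" using kp by simp
      then show "exp (\<i> * complex_of_real (ipair (tau e) 0))
        / complex_of_real (sqrt (real (deg src v) * real (deg src (tgt e)))) * complex_of_real (sqrt (k (tgt e)))
        = complex_of_real (1 / sqrt (k v))"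
        by (simp add: ipair_zero real_sqrt_mult k_def[symmetric] field_simps)
    qed
    also have "\<dots> = complex_of_real (k v / sqrt (k v))"
      by (simp add: k_def deg_def)
    also have "k v / sqrt (k v) = sqrt (k v)"
      using kp by (metis less_eq_real_def real_div_sqrt)
    finally show "fiber_H src tgt tau (\<lambda>_. 0) 0 (\<lambda>v. complex_of_real (sqrt (k v))) v
      = complex_of_real (0 * sqrt (k v))"
      by (simp add: fiber_H_def fiber_lap_def k_def)
  qed
  have one: "sqrt (k (tgt e)) * sqrt (k (src e)) / sqrt (k (tgt e) * k (src e)) = 1" for e
    using kp[of "tgt e"] kp[of "src e"] by (simp add: real_sqrt_mult)
  show ?thesis
    using arg_cong[OF quad_id[OF eig, of \<theta> f], of Re]
    unfolding lap_H[symmetric] k_def[symmetric] one by simp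
qed

end


theorem lemma4p2:
  fixes src tgt :: "'e::finite \<Rightarrow> 'v::finite"
    and rv :: "'e \<Rightarrow> 'e"
    and tau :: "'e \<Rightarrow> int^'d"
    and Q :: "'v \<Rightarrow> real"
    and \<psi> :: "'v \<Rightarrow> real"
  assumes G: "periodic_quotient_graph src tgt rv tau"
    and pos: "\<forall>v. \<psi> v > 0"
    and eig: "fiber_H src tgt tau Q 0 (\<lambda>v. complex_of_real (\<psi> v))
              = (\<lambda>v. complex_of_real (smallest_eigenvalue (fiber_H src tgt tau Q 0) * \<psi> v))"
  shows "(\<forall>f \<theta>. inner_V
            (\<lambda>v. fiber_H src tgt tau Q \<theta> (\<lambda>w. complex_of_real (\<psi> w) * f w) v
                  - complex_of_real (smallest_eigenvalue (fiber_H src tgt tau Q 0))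
                    * (complex_of_real (\<psi> v) * f v))
            (\<lambda>w. complex_of_real (\<psi> w) * f w)
          = complex_of_real ((1/2) * (\<Sum>e\<in>UNIV.
              \<psi> (tgt e) * \<psi> (src e) / sqrt (real (deg src (tgt e)) * real (deg src (src e)))
              * (cmod (f (src e) - exp (\<i> * complex_of_real (ipair (tau e) \<theta>)) * f (tgt e)))\<^sup>2)))
       \<and> (let \<psi>m = Min (range (\<lambda>v. \<psi> v / sqrt (real (deg src v))));
              \<psi>p = Max (range (\<lambda>v. \<psi> v / sqrt (real (deg src v))));
              c0 = \<psi>p / \<psi>m
          in \<forall>\<theta>. c0 powi (-2) * smallest_eigenvalue (fiber_lap src tgt tau \<theta>)
                   \<le> smallest_eigenvalue (fiber_H src tgt tau Q \<theta>)
                     - smallest_eigenvalue (fiber_H src tgt tau Q 0)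
               \<and> smallest_eigenvalue (fiber_H src tgt tau Q \<theta>)
                     - smallest_eigenvalue (fiber_H src tgt tau Q 0)
                   \<le> c0\<^sup>2 * smallest_eigenvalue (fiber_lap src tgt tau \<theta>))"
proof -
  interpret pqg src tgt rv tau by (rule pqg.intro[OF G])
  define L where "L = smallest_eigenvalue (fiber_H src tgt tau Q 0)"
  have part1: "\<forall>f \<theta>. inner_V
            (\<lambda>v. fiber_H src tgt tau Q \<theta> (\<lambda>w. complex_of_real (\<psi> w) * f w) v
                  - complex_of_real (smallest_eigenvalue (fiber_H src tgt tau Q 0))
                    * (complex_of_real (\<psi> v) * f v))
            (\<lambda>w. complex_of_real (\<psi> w) * f w)
          = complex_of_real ((1/2) * (\<Sum>e\<in>UNIV.
              \<psi> (tgt e) * \<psi> (src e) / sqrt (real (deg src (tgt e)) * real (deg src (src e)))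
              * (cmod (f (src e) - exp (\<i> * complex_of_real (ipair (tau e) \<theta>)) * f (tgt e)))\<^sup>2))"
    using quad_id[OF eig] by blast
  define k where "k v = real (deg src v)" for v
  have kp: "k v > 0" for v using deg_pos by (simp add: k_def)
  define a where "a v = \<psi> v / sqrt (k v)" for v
  have ap: "a v > 0" for v using kp pos by (simp add: a_def)
  define pm where "pm = Min (range a)"
  define pp where "pp = Max (range a)"
  have pm_le: "pm \<le> a v" for v unfolding pm_def by (rule Min_le) auto
  have pp_ge: "a v \<le> pp" for v unfolding pp_def by (rule Max_ge) auto
  have pmp: "pm > 0"
  proof -
    have "pm \<in> range a" unfolding pm_def by (rule Min_in) auto
    then show ?thesis using ap by auto
  qed
  have ppp: "pp > 0" using pmp pm_le[of undefined] pp_ge[of undefined] by linarith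
  define ND where "ND \<theta> f = (1/2) * (\<Sum>e\<in>UNIV. (cmod (f (src e) - exp (\<i> * complex_of_real (ipair (tau e) \<theta>)) * f (tgt e)))\<^sup>2)"
    for \<theta> and f :: "'v \<Rightarrow> complex"
  define c where "c e = \<psi> (tgt e) * \<psi> (src e) / sqrt (k (tgt e) * k (src e))" for e
  define NH where "NH \<theta> f = (1/2) * (\<Sum>e\<in>UNIV. c e * (cmod (f (src e) - exp (\<i> * complex_of_real (ipair (tau e) \<theta>)) * f (tgt e)))\<^sup>2)"
    for \<theta> and f :: "'v \<Rightarrow> complex"
  define DH where "DH f = nrm2 (\<lambda>w. complex_of_real (\<psi> w) * f w)" for f :: "'v \<Rightarrow> complex"
  define DD where "DD f = nrm2 (\<lambda>w. complex_of_real (sqrt (k w)) * f w)" for f :: "'v \<Rightarrow> complex"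
  have ca: "c e = a (tgt e) * a (src e)" for e
    by (simp add: c_def a_def real_sqrt_mult)
  have cb: "pm\<^sup>2 \<le> c e \<and> c e \<le> pp\<^sup>2" for e
  proof -
    have "pm * pm \<le> a (tgt e) * a (src e)"
      using pm_le pmp ap by (intro mult_mono) (auto simp: less_imp_le)
    moreover have "a (tgt e) * a (src e) \<le> pp * pp"
      using pp_ge ap ppp by (intro mult_mono) (auto simp: less_imp_le)
    ultimately show ?thesis by (simp add: ca power2_eq_square)
  qed
  have ND_nn: "ND \<theta> f \<ge> 0" for \<theta> f by (simp add: ND_def sum_nonneg)
  have NH_lo: "pm\<^sup>2 * ND \<theta> f \<le> NH \<theta> f" for \<theta> f
    unfolding ND_def NH_def using cb
    by (simp add: sum_distrib_left mult_right_mono sum_mono)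
  have NH_hi: "NH \<theta> f \<le> pp\<^sup>2 * ND \<theta> f" for \<theta> f
    unfolding ND_def NH_def using cb
    by (simp add: sum_distrib_left mult_right_mono sum_mono)
  have DH_eq: "DH f = (\<Sum>v\<in>UNIV. k v * (a v)\<^sup>2 * (cmod (f v))\<^sup>2)" for f
  proof -
    have "(\<psi> v)\<^sup>2 = k v * (a v)\<^sup>2" for v
      using kp[of v] by (simp add: a_def power_divide)
    then show ?thesis by (simp add: DH_def nrm2_def norm_mult power_mult_distrib)
  qed
  have DD_eq: "DD f = (\<Sum>v\<in>UNIV. k v * (cmod (f v))\<^sup>2)" for f
    using kp by (simp add: DD_def nrm2_def norm_mult power_mult_distrib less_imp_le)
  have DH_lo: "pm\<^sup>2 * DD f \<le> DH f" for f
    unfolding DH_eq DD_eq sum_distrib_left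
  proof (rule sum_mono)
    fix v
    have "pm\<^sup>2 \<le> (a v)\<^sup>2" using pm_le[of v] pmp by (intro power_mono) auto
    then show "pm\<^sup>2 * (k v * (cmod (f v))\<^sup>2) \<le> k v * (a v)\<^sup>2 * (cmod (f v))\<^sup>2"
      using kp[of v] by (simp add: mult_right_mono mult.assoc mult.left_commute)
  qed
  have DH_hi: "DH f \<le> pp\<^sup>2 * DD f" for f
    unfolding DH_eq DD_eq sum_distrib_left
  proof (rule sum_mono)
    fix v
    have "(a v)\<^sup>2 \<le> pp\<^sup>2" using pp_ge[of v] ap[of v] by (intro power_mono) (auto simp: less_imp_le)
    then show "k v * (a v)\<^sup>2 * (cmod (f v))\<^sup>2 \<le> pp\<^sup>2 * (k v * (cmod (f v))\<^sup>2)"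
      using kp[of v] by (simp add: mult_right_mono mult.assoc mult.left_commute)
  qed
  have quadH: "Re (inner_V (fiber_H src tgt tau Q \<theta> (\<lambda>w. complex_of_real (\<psi> w) * f w)) (\<lambda>w. complex_of_real (\<psi> w) * f w))
      = NH \<theta> f + L * DH f" for \<theta> f
  proof -
    have e: "inner_V
            (\<lambda>v. fiber_H src tgt tau Q \<theta> (\<lambda>w. complex_of_real (\<psi> w) * f w) v
                  - complex_of_real L * (complex_of_real (\<psi> v) * f v))
            (\<lambda>w. complex_of_real (\<psi> w) * f w) = complex_of_real (NH \<theta> f)"
      using part1 unfolding L_def NH_def c_def k_def by blast
    have e2: "inner_V (fiber_H src tgt tau Q \<theta> (\<lambda>w. complex_of_real (\<psi> w) * f w)) (\<lambda>w. complex_of_real (\<psi> w) * f w)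
        - complex_of_real L * complex_of_real (DH f) = complex_of_real (NH \<theta> f)"
      using e unfolding DH_def by (simp only: inner_V_diff1 inner_V_scale1 inner_V_self)
    have "Re (inner_V (fiber_H src tgt tau Q \<theta> (\<lambda>w. complex_of_real (\<psi> w) * f w)) (\<lambda>w. complex_of_real (\<psi> w) * f w))
        - L * DH f = NH \<theta> f"
      using arg_cong[OF e2, of Re] by simp
    then show ?thesis by simp
  qed
  have lapq: "Re (inner_V (fiber_lap src tgt tau \<theta> (\<lambda>w. complex_of_real (sqrt (k w)) * f w))
        (\<lambda>w. complex_of_real (sqrt (k w)) * f w)) = ND \<theta> f" for \<theta> f
    unfolding k_def ND_def by (rule lap_id)
  have part2: "smallest_eigenvalue (fiber_lap src tgt tau \<theta>) \<ge> 0
     \<and> (pm / pp)\<^sup>2 * smallest_eigenvalue (fiber_lap src tgt tau \<theta>)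
        \<le> smallest_eigenvalue (fiber_H src tgt tau Q \<theta>) - L
     \<and> smallest_eigenvalue (fiber_H src tgt tau Q \<theta>) - L
        \<le> (pp / pm)\<^sup>2 * smallest_eigenvalue (fiber_lap src tgt tau \<theta>)" for \<theta>
  proof -
    define lam where "lam = smallest_eigenvalue (fiber_H src tgt tau Q \<theta>)"
    define l0 where "l0 = smallest_eigenvalue (fiber_lap src tgt tau \<theta>)"
    have SH: "\<forall>g. lam * nrm2 g \<le> Re (inner_V (fiber_H src tgt tau Q \<theta> g) g)"
      and SH2: "is_eigenvalue (fiber_H src tgt tau Q \<theta>) lam"
      using spec_H[of Q \<theta>] unfolding lam_def by auto
    have SL: "\<forall>g. l0 * nrm2 g \<le> Re (inner_V (fiber_lap src tgt tau \<theta> g) g)"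
      and SL2: "is_eigenvalue (fiber_lap src tgt tau \<theta>) l0"
      using spec_H[of "\<lambda>_. 0" \<theta>] unfolding l0_def lap_H by auto
    obtain h where hnz: "h \<noteq> (\<lambda>_. 0)" and he: "fiber_lap src tgt tau \<theta> h = (\<lambda>v. complex_of_real l0 * h v)"
      using SL2 unfolding is_eigenvalue_def by blast
    define fh where "fh w = h w / complex_of_real (sqrt (k w))" for w
    have hfh: "(\<lambda>w. complex_of_real (sqrt (k w)) * fh w) = h"
    proof (rule ext)
      fix w
      have "k w \<noteq> 0" using kp[of w] by simp
      then show "complex_of_real (sqrt (k w)) * fh w = h w" by (simp add: fh_def)
    qed
    have hpos: "nrm2 h > 0" using hnz nrm2_zero nrm2_nonneg[of h] by (metis less_eq_real_def)
    have NDh: "ND \<theta> fh = l0 * DD fh"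
      using lapq[of \<theta> fh] unfolding hfh DD_def he inner_V_scale1 inner_V_self by simp
    have DDh: "DD fh = nrm2 h" unfolding DD_def hfh ..
    have l0nn: "l0 \<ge> 0"
    proof -
      have "l0 * nrm2 h \<ge> 0" using NDh DDh ND_nn[of \<theta> fh] by simp
      then show ?thesis using hpos by (simp add: zero_le_mult_iff)
    qed
    obtain g where gnz: "g \<noteq> (\<lambda>_. 0)" and ge: "fiber_H src tgt tau Q \<theta> g = (\<lambda>v. complex_of_real lam * g v)"
      using SH2 unfolding is_eigenvalue_def by blast
    define fg where "fg w = g w / complex_of_real (\<psi> w)" for w
    have gfg: "(\<lambda>w. complex_of_real (\<psi> w) * fg w) = g"
    proof (rule ext)
      fix w
      have "\<psi> w \<noteq> 0" using pos by (metis less_irrefl)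
      then show "complex_of_real (\<psi> w) * fg w = g w" by (simp add: fg_def)
    qed
    have gpos: "nrm2 g > 0" using gnz nrm2_zero nrm2_nonneg[of g] by (metis less_eq_real_def)
    have DHg: "DH fg = nrm2 g" unfolding DH_def gfg ..
    have "lam * DH fg = NH \<theta> fg + L * DH fg"
      using quadH[of \<theta> fg] unfolding gfg ge inner_V_scale1 inner_V_self DHg by simp
    then have eq1: "(lam - L) * DH fg = NH \<theta> fg" by (simp add: algebra_simps)
    have "l0 * DD fg \<le> ND \<theta> fg" using SL lapq[of \<theta> fg] unfolding DD_def by metis
    then have "pm\<^sup>2 * (l0 * DD fg) \<le> pm\<^sup>2 * ND \<theta> fg" by (simp add: mult_left_mono)
    also have "\<dots> \<le> (lam - L) * DH fg" using NH_lo eq1 by simp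
    finally have i1: "pm\<^sup>2 * (l0 * DD fg) \<le> (lam - L) * DH fg" .
    have i2: "DH fg / pp\<^sup>2 \<le> DD fg" using DH_hi[of fg] ppp by (simp add: pos_divide_le_eq mult.commute)
    have "(pm / pp)\<^sup>2 * l0 * DH fg = pm\<^sup>2 * (l0 * (DH fg / pp\<^sup>2))"
      by (simp add: power_divide)
    also have "\<dots> \<le> pm\<^sup>2 * (l0 * DD fg)"
      using i2 l0nn by (intro mult_left_mono) auto
    also note i1
    finally have "((pm / pp)\<^sup>2 * l0) * DH fg \<le> (lam - L) * DH fg" by simp
    then have low: "(pm / pp)\<^sup>2 * l0 \<le> lam - L" using gpos DHg by simp
    have fhnz: "(\<lambda>w. complex_of_real (\<psi> w) * fh w) \<noteq> (\<lambda>_. 0)"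
    proof
      assume z: "(\<lambda>w. complex_of_real (\<psi> w) * fh w) = (\<lambda>_. 0)"
      obtain v where v: "h v \<noteq> 0" using hnz by auto
      have "complex_of_real (\<psi> v) * fh v = 0" using fun_cong[OF z, of v] by simp
      then show False using v pos[rule_format, of v] kp[of v] by (simp add: fh_def)
    qed
    have DHpos: "DH fh > 0" unfolding DH_def
      using fhnz nrm2_zero nrm2_nonneg by (metis less_eq_real_def)
    have "lam * DH fh \<le> NH \<theta> fh + L * DH fh"
      using SH quadH[of \<theta> fh] unfolding DH_def by metis
    then have "(lam - L) * DH fh \<le> NH \<theta> fh" by (simp add: algebra_simps)
    also have "\<dots> \<le> pp\<^sup>2 * ND \<theta> fh" by (rule NH_hi)
    also have "\<dots> = pp\<^sup>2 * (l0 * DD fh)" by (simp add: NDh)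
    also have "\<dots> \<le> pp\<^sup>2 * (l0 * (DH fh / pm\<^sup>2))"
    proof -
      have "DD fh \<le> DH fh / pm\<^sup>2" using DH_lo[of fh] pmp by (simp add: pos_le_divide_eq mult.commute)
      then show ?thesis using l0nn by (intro mult_left_mono) (auto intro: mult_left_mono)
    qed
    also have "\<dots> = ((pp / pm)\<^sup>2 * l0) * DH fh" by (simp add: power_divide)
    finally have up: "lam - L \<le> (pp / pm)\<^sup>2 * l0" using DHpos by simp
    show ?thesis using low up l0nn unfolding lam_def l0_def by simp
  qed
  have cpow: "(pp / pm) powi (-2) = (pm / pp)\<^sup>2"
    by (simp add: power_int_minus power_divide)
  show ?thesis
    unfolding Let_def
    using part1 part2 cpow
    unfolding pm_def pp_def a_def k_def L_def
    by simp
qed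


end
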